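(* Let $L$ be an orthomodular lattice in which every Mayet-Godowski equation holds. Then $L$ satisfies $n$-Go for every $n\ge3$.
   Context: An orthomodular lattice is a bounded lattice with an operation $'$ satisfying $a''=a$, $a\le b\Rightarrow b'\le a'$, $a\cap a'=0$ and $a\cup a'=1$, in which moreover $a\le b$ implies $b=a\cup(a'\cap b)$. Write $a\perp b$ for $a\le b'$ and $a\to b=a'\cup(a\cap b)$. $n$-Go is the equation $$(a_1\to a_2)\cap(a_2\to a_3)\cap\cdots\cap(a_{n-1}\to a_n)\cap(a_n\to a_1)=(a_n\to a_{n-1})\cap\cdots\cap(a_2\to a_1)\cap(a_1\to a_n).$$ A Mayet-Godowski equation (MGE) is a conditional equality $t_1\cap\cdots\cap t_n=u_1\cap\cdots\cap u_n$, $n\ge2$. Each $t_i$ and $u_i$ is a single variable or a join of two or more distinct variables. The hypotheses are that variables in the same term are mutually orthogonal, and each variable must occur the same number of times among the $t_i$ as among the $u_i$. It holds in $L$ if the equality is true for all assignments satisfying the orthogonality hypotheses. *)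

theory Defs
  imports Main "HOL-Library.Complemented_Lattices"
begin

definition orth :: "'a::orthomodular_lattice \<Rightarrow> 'a \<Rightarrow> bool" where
  "orth a b \<longleftrightarrow> a \<le> - b"

definition imp :: "'a::orthomodular_lattice \<Rightarrow> 'a \<Rightarrow> 'a" where
  "imp a b = sup (- a) (inf a b)"

definition meet_list :: "'a::orthomodular_lattice list \<Rightarrow> 'a" where
  "meet_list xs = foldr inf xs top"

definition join_list :: "'a::orthomodular_lattice list \<Rightarrow> 'a" where
  "join_list xs = foldr sup xs bot"

text \<open>A term of an MGE is a nonempty list of distinct variables (natural numbers),
  read as the join of these variables (a single variable when the list has length 1).\<close>

definition mge_term :: "nat list \<Rightarrow> bool" where
  "mge_term t \<longleftrightarrow> t \<noteq> [] \<and> distinct t"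

definition is_mge :: "nat list list \<Rightarrow> nat list list \<Rightarrow> bool" where
  "is_mge ts us \<longleftrightarrow> length ts = length us \<and> length ts \<ge> 2
     \<and> (\<forall>t \<in> set ts. mge_term t) \<and> (\<forall>u \<in> set us. mge_term u)
     \<and> (\<forall>v. length (filter (\<lambda>t. v \<in> set t) ts) = length (filter (\<lambda>u. v \<in> set u) us))"

definition eval_term :: "(nat \<Rightarrow> 'a::orthomodular_lattice) \<Rightarrow> nat list \<Rightarrow> 'a" where
  "eval_term f t = join_list (map f t)"

definition term_orth :: "(nat \<Rightarrow> 'a::orthomodular_lattice) \<Rightarrow> nat list \<Rightarrow> bool" where
  "term_orth f t \<longleftrightarrow> (\<forall>x \<in> set t. \<forall>y \<in> set t. x \<noteq> y \<longrightarrow> orth (f x) (f y))"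

definition mge_holds :: "'a::orthomodular_lattice itself \<Rightarrow> nat list list \<Rightarrow> nat list list \<Rightarrow> bool" where
  "mge_holds _ ts us \<longleftrightarrow> (\<forall>f :: nat \<Rightarrow> 'a.
     (\<forall>t \<in> set ts. term_orth f t) \<and> (\<forall>u \<in> set us. term_orth f u) \<longrightarrow>
     meet_list (map (eval_term f) ts) = meet_list (map (eval_term f) us))"

definition all_mge_hold :: "'a::orthomodular_lattice itself \<Rightarrow> bool" where
  "all_mge_hold T \<longleftrightarrow> (\<forall>ts us. is_mge ts us \<longrightarrow> mge_holds T ts us)"

text \<open>n-Go with variables a_1..a_n renamed a 0 .. a (n-1):
  (a1\<rightarrow>a2)\<and>...\<and>(a(n-1)\<rightarrow>an)\<and>(an\<rightarrow>a1) = (an\<rightarrow>a(n-1))\<and>...\<and>(a2\<rightarrow>a1)\<and>(a1\<rightarrow>an).\<close>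
definition n_go :: "'a::orthomodular_lattice itself \<Rightarrow> nat \<Rightarrow> bool" where
  "n_go _ n \<longleftrightarrow> (\<forall>a :: nat \<Rightarrow> 'a.
     meet_list (map (\<lambda>i. imp (a i) (a (i+1))) [0..<n-1] @ [imp (a (n-1)) (a 0)])
   = meet_list (map (\<lambda>i. imp (a (i+1)) (a i)) (rev [0..<n-1]) @ [imp (a 0) (a (n-1))]))"

end

theory Submission
  imports Defs
begin

lemma meet_list_append: "meet_list (xs @ ys) = inf (meet_list xs) (meet_list ys)"
  by (induction xs) (auto simp: meet_list_def inf_assoc)

lemma meet_list_rev: "meet_list (rev xs) = meet_list xs"
  by (induction xs) (simp_all add: meet_list_append, simp add: meet_list_def inf_commute)

lemma modsuc:
  assumes "i < (n::nat)" "v < n"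
  shows "((i+1) mod n = v) = (i = (v+n-1) mod n)"
proof (cases "v = 0")
  case True
  have "(v+n-1) mod n = n - 1" using True assms by simp
  moreover have "((i+1) mod n = 0) = (i = n - 1)"
  proof (cases "i+1 < n")
    case True then show ?thesis by simp
  next
    case False then have "i + 1 = n" using assms by simp
    then show ?thesis by auto
  qed
  ultimately show ?thesis using True by simp
next
  case False
  have "(v+n-1) mod n = v - 1"
  proof -
    have "v+n-1 = (v-1) + n" using False by simp
    moreover have "((v-1)+n) mod n = (v-1) mod n" by (rule mod_add_self2)
    moreover have "(v-1) mod n = v-1" using assms by simp
    ultimately show ?thesis by simp
  qed
  moreover have "((i+1) mod n = v) = (i = v - 1)"
  proof (cases "i+1 < n")
    case True then show ?thesis using False by auto
  next
    case F: False then have "i + 1 = n" using assms by simp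
    then show ?thesis using False assms by auto
  qed
  ultimately show ?thesis by simp
qed

lemma card_us:
  assumes "n \<ge> (2::nat)"
  shows "card {i. i < n \<and> (v = (i+1) mod n \<or> v = n + i)} = card {i. i < n \<and> (v = i \<or> v = n + i)}"
proof (cases "v < n")
  case True
  have A: "{i. i < n \<and> (v = i \<or> v = n + i)} = {v}" using True by auto
  have B: "{i. i < n \<and> (v = (i+1) mod n \<or> v = n + i)} = {(v+n-1) mod n}"
  proof (rule set_eqI)
    fix i
    have r: "(v+n-1) mod n < n" using True by simp
    show "i \<in> {i. i < n \<and> (v = (i+1) mod n \<or> v = n + i)} \<longleftrightarrow> i \<in> {(v+n-1) mod n}"
    proof
      assume "i \<in> {i. i < n \<and> (v = (i+1) mod n \<or> v = n + i)}"
      then have "i < n" "v = (i+1) mod n" using True by auto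
      then show "i \<in> {(v+n-1) mod n}" using modsuc[of i n v] True by simp
    next
      assume "i \<in> {(v+n-1) mod n}"
      then have "i = (v+n-1) mod n" by simp
      then have "i < n" "(i+1) mod n = v" using modsuc[of i n v] True r by auto
      then show "i \<in> {i. i < n \<and> (v = (i+1) mod n \<or> v = n + i)}" by simp
    qed
  qed
  show ?thesis unfolding A B by simp
next
  case False
  have "\<And>i. v \<noteq> (i+1) mod n"
  proof
    fix i assume "v = (i+1) mod n"
    moreover have "(i+1) mod n < n" using assms by simp
    ultimately show False using False by simp
  qed
  then have "{i. i < n \<and> (v = (i+1) mod n \<or> v = n + i)} = {i. i < n \<and> v = n + i}" by auto
  moreover have "{i. i < n \<and> (v = i \<or> v = n + i)} = {i. i < n \<and> v = n + i}" using False by auto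
  ultimately show ?thesis by simp
qed

lemma len_filter_upt: "length (filter P (map F [0..<n])) = card {i. i<n \<and> P (F i)}"
proof -
  have "length (filter P (map F [0..<n])) = length (filter (P \<circ> F) [0..<n])" by (simp add: filter_map)
  also have "\<dots> = card ({x. (P \<circ> F) x} \<inter> set [0..<n])" by (rule distinct_length_filter) simp
  also have "{x. (P \<circ> F) x} \<inter> set [0..<n] = {i. i<n \<and> P (F i)}" by auto
  finally show ?thesis .
qed

theorem theorem6p5:
  assumes "all_mge_hold TYPE('a::orthomodular_lattice)"
    and "n \<ge> 3"
  shows "n_go TYPE('a) n"
  unfolding n_go_def
proof
  fix a :: "nat \<Rightarrow> 'a"
  define ts where "ts = map (\<lambda>i. [i, n+i]) [0..<n]"
  define us where "us = map (\<lambda>i. [(i+1) mod n, n+i]) [0..<n]"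
  define f :: "nat \<Rightarrow> 'a" where
    "f v = (if v < n then - a v else inf (a (v-n)) (a ((v-n+1) mod n)))" for v
  have n2: "n \<ge> 2" using assms(2) by simp
  have mge: "is_mge ts us"
    unfolding is_mge_def
  proof (intro conjI allI)
    show "length ts = length us" "2 \<le> length ts" using n2 by (auto simp: ts_def us_def)
    show "\<forall>t\<in>set ts. mge_term t" by (auto simp: ts_def mge_term_def)
    show "\<forall>u\<in>set us. mge_term u"
    proof
      fix u assume "u \<in> set us"
      then obtain i where "u = [(i+1) mod n, n+i]" by (auto simp: us_def)
      moreover have "(i+1) mod n < n" using n2 by simp
      ultimately show "mge_term u" by (simp add: mge_term_def)
    qed
    fix v
    have "length (filter (\<lambda>t. v \<in> set t) ts) = card {i. i < n \<and> v \<in> set [i, n+i]}"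
      unfolding ts_def by (rule len_filter_upt)
    also have "{i. i < n \<and> v \<in> set [i, n+i]} = {i. i < n \<and> (v = i \<or> v = n + i)}" by auto
    finally have "length (filter (\<lambda>t. v \<in> set t) ts) = card {i. i < n \<and> (v = i \<or> v = n + i)}" .
    moreover have "length (filter (\<lambda>t. v \<in> set t) us) = card {i. i < n \<and> v \<in> set [(i+1) mod n, n+i]}"
      unfolding us_def by (rule len_filter_upt)
    moreover have "{i. i < n \<and> v \<in> set [(i+1) mod n, n+i]} = {i. i < n \<and> (v = (i+1) mod n \<or> v = n + i)}" by auto
    ultimately show "length (filter (\<lambda>t. v \<in> set t) ts) = length (filter (\<lambda>u. v \<in> set u) us)"
      using card_us[OF n2, of v] by simp
  qed
  have hyp: "(\<forall>t \<in> set ts. term_orth f t) \<and> (\<forall>u \<in> set us. term_orth f u)"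
    using n2 by (auto simp: ts_def us_def term_orth_def orth_def f_def)
  have eq: "meet_list (map (eval_term f) ts) = meet_list (map (eval_term f) us)"
    using assms(1) mge hyp unfolding all_mge_hold_def mge_holds_def by blast
  define g where "g i = imp (a i) (a ((i+1) mod n))" for i
  define h where "h i = imp (a ((i+1) mod n)) (a i)" for i
  have upt: "[0..<n] = [0..<n-1] @ [n-1]" using n2
  proof -
    obtain m where "n = Suc m" using n2 by (cases n) auto
    then show ?thesis by simp
  qed
  have L: "map (eval_term f) ts = map g [0..<n]"
    unfolding ts_def map_map
  proof (rule map_cong)
    fix i assume "i \<in> set [0..<n]"
    then have i: "i < n" by simp
    have "eval_term f [i, n+i] = sup (f i) (f (n+i))" by (simp add: eval_term_def join_list_def)
    also have "\<dots> = g i" using i by (simp add: f_def g_def imp_def)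
    finally show "(eval_term f \<circ> (\<lambda>i. [i, n + i])) i = g i" by simp
  qed simp
  have R: "map (eval_term f) us = map h [0..<n]"
    unfolding us_def map_map
  proof (rule map_cong)
    fix i assume "i \<in> set [0..<n]"
    then have i: "i < n" by simp
    have m: "(i+1) mod n < n" using i by simp
    have "eval_term f [(i+1) mod n, n+i] = sup (f ((i+1) mod n)) (f (n+i))" by (simp add: eval_term_def join_list_def)
    also have "\<dots> = sup (- a ((i+1) mod n)) (inf (a i) (a ((i+1) mod n)))" using m by (simp add: f_def)
    also have "\<dots> = h i" by (simp add: h_def imp_def inf.commute)
    finally show "(eval_term f \<circ> (\<lambda>i. [(i+1) mod n, n + i])) i = h i" by simp
  qed simp
  have g1: "map g [0..<n-1] = map (\<lambda>i. imp (a i) (a (i+1))) [0..<n-1]"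
    by (auto simp: g_def)
  have g2: "g (n-1) = imp (a (n-1)) (a 0)" using n2 by (simp add: g_def)
  have h1: "map h [0..<n-1] = map (\<lambda>i. imp (a (i+1)) (a i)) [0..<n-1]"
    by (auto simp: h_def)
  have h2: "h (n-1) = imp (a 0) (a (n-1))" using n2 by (simp add: h_def)
  show "meet_list (map (\<lambda>i. imp (a i) (a (i + 1))) [0..<n - 1] @ [imp (a (n - 1)) (a 0)]) =
         meet_list (map (\<lambda>i. imp (a (i + 1)) (a i)) (rev [0..<n - 1]) @ [imp (a 0) (a (n - 1))])"
  proof -
    have "meet_list (map g [0..<n]) = meet_list (map h [0..<n])" using eq unfolding L R .
    moreover have "meet_list (map g [0..<n]) = meet_list (map (\<lambda>i. imp (a i) (a (i + 1))) [0..<n - 1] @ [imp (a (n - 1)) (a 0)])"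
      unfolding upt map_append list.map g1 g2 by (rule refl)
    moreover have "meet_list (map h [0..<n]) = meet_list (map (\<lambda>i. imp (a (i + 1)) (a i)) (rev [0..<n - 1]) @ [imp (a 0) (a (n - 1))])"
      unfolding upt map_append list.map h1 h2 meet_list_append rev_map[symmetric] meet_list_rev by (rule refl)
    ultimately show ?thesis by simp
  qed
qed

end
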